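(* Let $(A,C,k)$ be an instance with $n$ voters, let $f:\mathbb{N}\to\mathbb{R}$, let $t$ be a positive integer, and let $W$ be an $f$-representative committee with $\max_{c\in C\setminus W}|N_c| \ge t\frac{n}{k}$. Then the utilitarian ratio of $W$ is at least $\min\left(\frac12, \frac{f(t)}{2k}\right)$.
   Context: An instance $(A,C,k)$ consists of a finite nonempty candidate set $C$, voters $N=\{1,\dots,n\}$, approval sets $A_i\subseteq C$, and a committee size $1\le k\le |C|$. $N_c=\{i\in N: c\in A_i\}$. A committee is a set $W\subseteq C$ with $|W|\le k$. The utilitarian welfare is $\mathrm{sw}(W)=\sum_{i\in N}|A_i\cap W|$, and the utilitarian ratio of $W$ is $\mathrm{sw}(W)/\max\{\mathrm{sw}(W'): W'\subseteq C, |W'|=k\}$. A committee $W$ is $f$-representative if for every $c\in C\setminus W$, every $\ell\in\{1,\dots,k\}$, and every $N'\subseteq N_c$ with $|N'|\ge \ell\frac{n}{k}$, we have $\frac{1}{|N'|}\sum_{i\in N'}|A_i\cap W|\ge f(\ell)$. *)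

theory Defs
  imports Complex_Main
begin

definition is_instance :: "'c set \<Rightarrow> nat \<Rightarrow> (nat \<Rightarrow> 'c set) \<Rightarrow> nat \<Rightarrow> bool" where
  "is_instance C n A k \<longleftrightarrow> finite C \<and> C \<noteq> {} \<and> (\<forall>i\<in>{1..n}. A i \<subseteq> C) \<and> 1 \<le> k \<and> k \<le> card C"

definition supporters :: "nat \<Rightarrow> (nat \<Rightarrow> 'c set) \<Rightarrow> 'c \<Rightarrow> nat set" where
  "supporters n A c = {i \<in> {1..n}. c \<in> A i}"

definition committee :: "'c set \<Rightarrow> nat \<Rightarrow> 'c set \<Rightarrow> bool" where
  "committee C k W \<longleftrightarrow> W \<subseteq> C \<and> card W \<le> k"

definition sw :: "nat \<Rightarrow> (nat \<Rightarrow> 'c set) \<Rightarrow> 'c set \<Rightarrow> nat" where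
  "sw n A W = (\<Sum>i\<in>{1..n}. card (A i \<inter> W))"

definition util_ratio :: "'c set \<Rightarrow> nat \<Rightarrow> (nat \<Rightarrow> 'c set) \<Rightarrow> nat \<Rightarrow> 'c set \<Rightarrow> real" where
  "util_ratio C n A k W =
     real (sw n A W) / real (Max {sw n A W' | W'. W' \<subseteq> C \<and> card W' = k})"

definition f_representative ::
  "(nat \<Rightarrow> real) \<Rightarrow> 'c set \<Rightarrow> nat \<Rightarrow> (nat \<Rightarrow> 'c set) \<Rightarrow> nat \<Rightarrow> 'c set \<Rightarrow> bool" where
  "f_representative f C n A k W \<longleftrightarrow>
     (\<forall>c \<in> C - W. \<forall>l \<in> {1..k}. \<forall>N' \<subseteq> supporters n A c.
        real (card N') \<ge> real l * real n / real k \<longrightarrow>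
        (\<Sum>i\<in>N'. real (card (A i \<inter> W))) / real (card N') \<ge> f l)"

end

theory Submission
  imports Defs
begin

lemma double_count:
  assumes "finite S"
  shows "(\<Sum>i\<in>{1..n}. card (A i \<inter> S)) = (\<Sum>c\<in>S. card (supporters n A c))"
proof -
  have "(\<Sum>i\<in>{1..n}. card (A i \<inter> S)) = (\<Sum>i\<in>{1..n}. \<Sum>c\<in>S. if c \<in> A i then 1 else (0::nat))"
  proof (rule sum.cong)
    fix i
    have "card (A i \<inter> S) = card {c \<in> S. c \<in> A i}" proof -
      have "{c \<in> S. c \<in> A i} = A i \<inter> S" by blast
      thus ?thesis by simp
    qed
    also have "\<dots> = (\<Sum>c\<in>S. if c \<in> A i then 1 else (0::nat))"
    proof -
      have "{c \<in> S. c \<in> A i} = S \<inter> A i" by blast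
      thus ?thesis using assms by (simp add: sum.If_cases)
    qed
    finally show "card (A i \<inter> S) = (\<Sum>c\<in>S. if c \<in> A i then 1 else (0::nat))" .
  qed simp
  also have "\<dots> = (\<Sum>c\<in>S. \<Sum>i\<in>{1..n}. if c \<in> A i then 1 else (0::nat))"
    by (rule sum.swap)
  also have "\<dots> = (\<Sum>c\<in>S. card (supporters n A c))"
  proof (rule sum.cong)
    fix c
    show "(\<Sum>i\<in>{1..n}. if c \<in> A i then 1 else (0::nat)) = card (supporters n A c)"
    proof -
      have "supporters n A c = {1..n} \<inter> {i. c \<in> A i}" by (auto simp: supporters_def)
      thus ?thesis by (simp add: sum.If_cases)
    qed
  qed simp
  finally show ?thesis .
qed

theorem lemma1:
  fixes C :: "'c set" and A :: "nat \<Rightarrow> 'c set" and n k t :: nat and f :: "nat \<Rightarrow> real"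
    and W :: "'c set"
  assumes "is_instance C n A k"
    and "n \<ge> 1"
    and "t \<ge> 1"
    and "committee C k W"
    and "f_representative f C n A k W"
    and "C - W \<noteq> {}"
    and "real (Max ((\<lambda>c. card (supporters n A c)) ` (C - W))) \<ge> real t * real n / real k"
  shows "util_ratio C n A k W \<ge> min (1/2) (f t / (2 * real k))"
proof -
  have finC: "finite C" and k1: "1 \<le> k" and kC: "k \<le> card C"
    using assms(1) by (auto simp: is_instance_def)
  have WC: "W \<subseteq> C" and Wk: "card W \<le> k" using assms(4) by (auto simp: committee_def)
  define m where "m = Max ((\<lambda>c. card (supporters n A c)) ` (C - W))"
  have "m \<in> (\<lambda>c. card (supporters n A c)) ` (C - W)"
    unfolding m_def using finC assms(6) by (intro Max_in) auto
  then obtain cs where cs: "cs \<in> C - W" "card (supporters n A cs) = m" by auto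
  have mge: "\<And>c. c \<in> C - W \<Longrightarrow> card (supporters n A c) \<le> m"
    unfolding m_def using finC by (intro Max_ge) auto
  have mpos: "real m > 0"
  proof -
    have "real t * real n / real k > 0" using assms(2,3) k1 by simp
    thus ?thesis using assms(7) m_def by linarith
  qed
  have tk: "t \<in> {1..k}"
  proof -
    have "supporters n A cs \<subseteq> {1..n}" by (auto simp: supporters_def)
    hence "m \<le> n" using cs by (metis card_mono finite_atLeastAtMost card_atLeastAtMost diff_Suc_1)
    hence "real t * real n / real k \<le> real n" using assms(7) m_def by linarith
    hence "real t * real n \<le> real n * real k" using k1 by (simp add: field_simps)
    hence "real t \<le> real k" using assms(2) by (simp add: mult.commute)
    thus ?thesis using assms(3) by simp
  qed
  define s where "s = sw n A W"
  have rep: "(\<Sum>i\<in>supporters n A cs. real (card (A i \<inter> W))) / real m \<ge> f t"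
  proof -
    have "real (card (supporters n A cs)) \<ge> real t * real n / real k" using cs assms(7) m_def by simp
    hence "(\<Sum>i\<in>supporters n A cs. real (card (A i \<inter> W))) / real (card (supporters n A cs)) \<ge> f t"
      using assms(5) cs(1) tk unfolding f_representative_def by blast
    thus ?thesis using cs by simp
  qed
  have "(\<Sum>i\<in>supporters n A cs. real (card (A i \<inter> W))) \<le> (\<Sum>i\<in>{1..n}. real (card (A i \<inter> W)))"
    by (rule sum_mono2) (auto simp: supporters_def)
  hence sFm: "real s \<ge> f t * real m"
    using rep mpos by (simp add: s_def sw_def pos_le_divide_eq mult.commute)
  define S where "S = {sw n A W' | W'. W' \<subseteq> C \<and> card W' = k}"
  have finS: "finite S"
  proof -
    have "S \<subseteq> (\<lambda>W'. sw n A W') ` Pow C" by (auto simp: S_def)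
    thus ?thesis using finC by (meson finite_Pow_iff finite_imageI finite_subset)
  qed
  have "S \<noteq> {}" using kC by (auto simp: S_def dest: obtain_subset_with_card_n)
  hence "Max S \<in> S" using finS by simp
  then obtain W' where W': "W' \<subseteq> C" "card W' = k" "Max S = sw n A W'" by (auto simp: S_def)
  have finW': "finite W'" using W' finC finite_subset by auto
  have finW: "finite W" using WC finC finite_subset by auto
  have O_le: "sw n A W' \<le> s + k * m"
  proof -
    have "sw n A W' = (\<Sum>c\<in>W'. card (supporters n A c))"
      unfolding sw_def using finW' by (rule double_count)
    also have "\<dots> = (\<Sum>c\<in>W' \<inter> W. card (supporters n A c)) + (\<Sum>c\<in>W' - W. card (supporters n A c))"
      using finW' by (rule sum.Int_Diff)
    also have "(\<Sum>c\<in>W' \<inter> W. card (supporters n A c)) \<le> (\<Sum>c\<in>W. card (supporters n A c))"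
      using finW by (intro sum_mono2) auto
    also have "\<dots> = s" unfolding s_def sw_def using finW by (rule double_count[symmetric])
    also have "(\<Sum>c\<in>W' - W. card (supporters n A c)) \<le> (\<Sum>c\<in>W' - W. m)"
      using W' mge by (intro sum_mono) auto
    also have "\<dots> = card (W' - W) * m" by simp
    also have "\<dots> \<le> k * m" using W' finW' by (intro mult_right_mono) (auto intro: card_mono)
    finally show ?thesis by simp
  qed
  define Opt where "Opt = sw n A W'"
  have Ole: "real Opt \<le> real s + real k * real m" using O_le Opt_def
    by (metis of_nat_add of_nat_le_iff of_nat_mult)
  have Opos: "real Opt > 0"
  proof -
    have "real s \<ge> 0" by simp
    have "m \<le> Opt"
    proof -
      have "card (C - {cs}) \<ge> k - 1" using kC cs finC by (simp add: card_Diff_singleton)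
      then obtain B where B: "B \<subseteq> C - {cs}" "card B = k - 1"
        by (meson obtain_subset_with_card_n)
      have finB: "finite B" using B finC finite_subset by blast
      define W2 where "W2 = insert cs B"
      have "card W2 = k" proof -
        have "cs \<notin> B" using B by blast
        thus ?thesis using B finB k1 by (simp add: W2_def)
      qed
      moreover have "W2 \<subseteq> C" using B cs by (auto simp: W2_def)
      ultimately have "sw n A W2 \<in> S" by (auto simp: S_def)
      hence "sw n A W2 \<le> Opt" using finS W'(3) Opt_def by (metis Max_ge)
      moreover have "m \<le> sw n A W2"
      proof -
        have "m = (\<Sum>i\<in>{1..n}. card (A i \<inter> {cs}))" using double_count[where S="{cs}" and n=n and A=A] cs by simp
        also have "\<dots> \<le> sw n A W2" unfolding sw_def
          using finB by (intro sum_mono card_mono) (auto simp: W2_def)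
        finally show ?thesis .
      qed
      ultimately show ?thesis by simp
    qed
    thus ?thesis using mpos by linarith
  qed
  have ratio: "util_ratio C n A k W = real s / real Opt"
    unfolding util_ratio_def s_def Opt_def using W'(3) S_def by simp
  have Opos': "real s \<ge> 0" by simp
  have "real s / real Opt \<ge> min (1/2) (f t / (2 * real k))"
  proof (cases "f t \<le> 0")
    case True
    have "f t / (2 * real k) \<le> 0" using True k1 by (simp add: divide_nonpos_pos)
    moreover have "real s / real Opt \<ge> 0" by simp
    ultimately show ?thesis by linarith
  next
    case False
    hence F: "f t > 0" by simp
    show ?thesis
    proof (cases "f t \<le> real k")
      case True
      have "f t * real Opt \<le> f t * (real s + real k * real m)" using Ole F by (intro mult_left_mono) auto
      also have "\<dots> = f t * real s + real k * (f t * real m)" by (simp add: algebra_simps)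
      also have "\<dots> \<le> f t * real s + real k * real s" using sFm k1 by (intro add_left_mono mult_left_mono) auto
      also have "\<dots> \<le> 2 * real k * real s" proof -
        have "f t * real s \<le> real k * real s" using True by (intro mult_right_mono) auto
        thus ?thesis by simp
      qed
      finally have "f t * real Opt \<le> 2 * real k * real s" .
      hence "f t / (2 * real k) \<le> real s / real Opt" using Opos k1 by (simp add: divide_simps mult.commute)
      thus ?thesis by linarith
    next
      case False
      have "real k * real m \<le> f t * real m" using False mpos by (intro mult_right_mono) auto
      hence "real Opt \<le> 2 * real s" using Ole sFm by linarith
      hence "1/2 \<le> real s / real Opt" using Opos by (simp add: divide_simps)
      thus ?thesis by linarith
    qed
  qed
  thus ?thesis using ratio by simp
qed

end
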